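(* Consider the stochastic extra-point scheme with fixed non-negative parameters $\alpha,\beta,\gamma,\eta,\tau$: starting from $z^0\in\mathcal Z$ with $z^{-1}:=z^0$ and $\hat F(z^{-1}):=\hat F(z^0)$, for $k=0,1,2,\dots$ $$z^{k+0.5}=P_{\mathcal Z}\big(z^k+\beta(z^k-z^{k-1})-\eta\hat F(z^k)\big),$$ $$z^{k+1}=P_{\mathcal Z}\big(z^k-\alpha\hat F(z^{k+0.5})+\gamma(z^k-z^{k-1})-\tau(\hat F(z^k)-\hat F(z^{k-1}))\big).$$ Then for every $k\ge 0$, $$(1-4|\gamma-\beta|-\tau L)\,d_{k+1}\le (1+4\gamma+6|\gamma-\beta|+4\tau L-\alpha\mu)\,d_k+(2|\gamma-\beta|+2\gamma+4\tau L)\,d_{k-1}$$ $$\qquad+(2\alpha^2L^2+2|\gamma-\beta|+2\gamma+2\alpha\mu-1)\,\mathbb E\big[\|z^{k+0.5}-z^k\|^2\big]+8\Big(\alpha^2+\frac{\tau}{L}\Big)\sigma^2+2\alpha\delta D+2(\eta-\alpha)\,\mathbb E\big[(z^{k+1}-z^{k+0.5})^\top\hat F(z^k)\big],$$ where $d_j:=\mathbb E[\|z^j-z^*\|^2]$ (so $d_{-1}=d_0=\|z^0-z^*\|^2$).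
   Context: Let $\mathcal Z\subseteq\mathbb R^n$ be a nonempty closed convex set with $\|z-z'\|\le D$ for all $z,z'\in\mathcal Z$. Let $F:\mathcal Z\to\mathbb R^n$ satisfy $(F(z)-F(z'))^\top(z-z')\ge\mu\|z-z'\|^2$ and $\|F(z)-F(z')\|\le L\|z-z'\|$ for all $z,z'\in\mathcal Z$, where $0<\mu\le L$; write $\kappa=L/\mu$. Let $z^*$ be the unique point of $\mathcal Z$ with $F(z^* )^\top(z-z^* )\ge 0$ for all $z\in\mathcal Z$. $P_{\mathcal Z}$ denotes Euclidean projection onto $\mathcal Z$. A stochastic oracle returns $\hat F(z,\xi)$ for a random sample $\xi$, and satisfies, for every $z\in\mathcal Z$, $\mathbb E_\xi\|\hat F(z,\xi)-F(z)\|\le\delta$ and $\mathbb E_\xi\|\hat F(z,\xi)-F(z)\|^2\le\sigma^2$ for constants $\delta,\sigma\ge0$. In the algorithms each oracle call $\hat F(z^j)$ (for $j$ an integer or half-integer) means $\hat F(z^j,\xi^j)$ with a fresh sample $\xi^j$ independent of all previously drawn samples (hence of $z^j$). *)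

theory Defs
  imports "HOL-Probability.Probability"
begin

text \<open>A sample path is omega :: nat => 's; the sample
 omega (2*k) is used for the oracle call at z^k and omega (2*k+1) for the call at z^(k+0.5).
 The value of the oracle at z^(k-1) used in iteration k is the one computed in iteration k-1
 (sample omega (2*(k-1))); for k = 0 it is the oracle value at z^0 (sample omega 0).\<close>

definition sep_prev_idx :: "nat \<Rightarrow> nat" where
  "sep_prev_idx k = (if k = 0 then 0 else 2 * (k - 1))"

text \<open>sep_iter ... k = (z^k, z^(k-1)), with z^(-1) = z^0.\<close>
fun sep_iter :: "'a::euclidean_space set \<Rightarrow> ('a \<Rightarrow> 's \<Rightarrow> 'a) \<Rightarrow> real \<Rightarrow> real \<Rightarrow> real \<Rightarrow> real \<Rightarrow> real
    \<Rightarrow> 'a \<Rightarrow> (nat \<Rightarrow> 's) \<Rightarrow> nat \<Rightarrow> 'a \<times> 'a" where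
  "sep_iter Z Fh \<alpha> \<beta> \<gamma> \<eta> \<tau> z0 \<omega> 0 = (z0, z0)"
| "sep_iter Z Fh \<alpha> \<beta> \<gamma> \<eta> \<tau> z0 \<omega> (Suc k) =
     (let (z, zp) = sep_iter Z Fh \<alpha> \<beta> \<gamma> \<eta> \<tau> z0 \<omega> k;
          gk = Fh z (\<omega> (2 * k));
          gp = Fh zp (\<omega> (sep_prev_idx k));
          zh = closest_point Z (z + \<beta> *\<^sub>R (z - zp) - \<eta> *\<^sub>R gk)
      in (closest_point Z (z - \<alpha> *\<^sub>R Fh zh (\<omega> (2 * k + 1)) + \<gamma> *\<^sub>R (z - zp)
                            - \<tau> *\<^sub>R (gk - gp)), z))"

definition sep_z where
  "sep_z Z Fh \<alpha> \<beta> \<gamma> \<eta> \<tau> z0 \<omega> k = fst (sep_iter Z Fh \<alpha> \<beta> \<gamma> \<eta> \<tau> z0 \<omega> k)"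

definition sep_zprev where
  "sep_zprev Z Fh \<alpha> \<beta> \<gamma> \<eta> \<tau> z0 \<omega> k = snd (sep_iter Z Fh \<alpha> \<beta> \<gamma> \<eta> \<tau> z0 \<omega> k)"

definition sep_zhalf where
  "sep_zhalf Z Fh \<alpha> \<beta> \<gamma> \<eta> \<tau> z0 \<omega> k =
     (let z = sep_z Z Fh \<alpha> \<beta> \<gamma> \<eta> \<tau> z0 \<omega> k; zp = sep_zprev Z Fh \<alpha> \<beta> \<gamma> \<eta> \<tau> z0 \<omega> k
      in closest_point Z (z + \<beta> *\<^sub>R (z - zp) - \<eta> *\<^sub>R Fh z (\<omega> (2 * k))))"

end

theory Submission imports Defs begin


lemma young:
  fixes x y :: "'a::real_inner"
  assumes "0 < c"
  shows "2 * (x \<bullet> y) \<le> c * (norm x)\<^sup>2 + (norm y)\<^sup>2 / c"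
proof -
  have "0 \<le> (norm (c *\<^sub>R x - y))\<^sup>2" by simp
  also have "\<dots> = c\<^sup>2 * (norm x)\<^sup>2 - 2 * c * (x \<bullet> y) + (norm y)\<^sup>2"
    unfolding power2_norm_eq_inner by (simp add: inner_simps inner_commute power2_eq_square algebra_simps)
  finally have h: "2 * c * (x \<bullet> y) \<le> c\<^sup>2 * (norm x)\<^sup>2 + (norm y)\<^sup>2" by simp
  have e: "c * (c * (norm x)\<^sup>2 + (norm y)\<^sup>2 / c) = c\<^sup>2 * (norm x)\<^sup>2 + (norm y)\<^sup>2"
    using assms by (simp add: field_simps power2_eq_square)
  have "c * (2 * (x \<bullet> y)) \<le> c * (c * (norm x)\<^sup>2 + (norm y)\<^sup>2 / c)"
    using h e by (simp only: mult.assoc[symmetric] mult.commute[of c 2])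
  then show ?thesis using assms by (rule mult_left_le_imp_le) 
qed

lemma sq_add:
  fixes x y :: "'a::real_inner"
  shows "(norm (x + y))\<^sup>2 \<le> 2 * (norm x)\<^sup>2 + 2 * (norm y)\<^sup>2"
proof -
  have "0 \<le> (norm (x - y))\<^sup>2" by simp
  then show ?thesis
    by (simp add: power2_norm_eq_inner inner_simps inner_commute algebra_simps)
qed

lemma sq_diff:
  fixes x y :: "'a::real_inner"
  shows "(norm (x - y))\<^sup>2 \<le> 2 * (norm x)\<^sup>2 + 2 * (norm y)\<^sup>2"
  using sq_add[of x "-y"] by simp

lemma pathwise:
  fixes w wp zh zn zs gk gp h Fw Fwp Fzh Fzs :: "'a::real_inner"
  assumes H1: "(w - \<alpha> *\<^sub>R h + \<gamma> *\<^sub>R (w - wp) - \<tau> *\<^sub>R (gk - gp) - zn) \<bullet> (zs - zn) \<le> 0"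
  and H2: "(w + \<beta> *\<^sub>R (w - wp) - \<eta> *\<^sub>R gk - zh) \<bullet> (zn - zh) \<le> 0"
  and H3: "(Fzh - Fzs) \<bullet> (zh - zs) \<ge> \<mu> * (norm (zh - zs))\<^sup>2"
  and H4: "Fzs \<bullet> (zh - zs) \<ge> 0"
  and H5: "norm (Fzh - Fw) \<le> L * norm (zh - w)"
  and H6: "norm (Fw - Fwp) \<le> L * norm (w - wp)"
  and mu: "0 < \<mu>" "\<mu> \<le> L"
  and par: "\<alpha> \<ge> 0" "\<beta> \<ge> 0" "\<gamma> \<ge> 0" "\<eta> \<ge> 0" "\<tau> \<ge> 0"
  shows "(1 - 4*\<bar>\<gamma>-\<beta>\<bar> - \<tau>*L) * (norm (zn - zs))\<^sup>2
   \<le> (1 + 4*\<gamma> + 6*\<bar>\<gamma>-\<beta>\<bar> + 4*\<tau>*L - \<alpha>*\<mu>) * (norm (w - zs))\<^sup>2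
     + (2*\<bar>\<gamma>-\<beta>\<bar> + 2*\<gamma> + 4*\<tau>*L) * (norm (wp - zs))\<^sup>2
     + (2*\<alpha>\<^sup>2*L\<^sup>2 + 2*\<bar>\<gamma>-\<beta>\<bar> + 2*\<gamma> + 2*\<alpha>*\<mu> - 1) * (norm (zh - w))\<^sup>2
     + 4*\<alpha>\<^sup>2*(norm (h - Fzh))\<^sup>2 + 4*\<alpha>\<^sup>2*(norm (gk - Fw))\<^sup>2
     + 4*(\<tau>/L)*((norm (gk - Fw))\<^sup>2 + (norm (Fwp - gp))\<^sup>2)
     - 2*\<alpha>*((h - Fzh) \<bullet> (zh - zs)) + 2*(\<eta>-\<alpha>)*((zn - zh) \<bullet> gk)"
proof -
  define g where "g = \<bar>\<gamma>-\<beta>\<bar>"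
  define N1 where "N1 = (norm (zn - zs))\<^sup>2"
  define N0 where "N0 = (norm (w - zs))\<^sup>2"
  define Np where "Np = (norm (wp - zs))\<^sup>2"
  define H where "H = (norm (zh - w))\<^sup>2"
  define Q where "Q = (norm (zn - zh))\<^sup>2"
  define Zh where "Zh = (norm (zh - zs))\<^sup>2"
  define W where "W = (norm (w - wp))\<^sup>2"
  define Znw where "Znw = (norm (zn - w))\<^sup>2"
  define a where "a = gk - Fw"
  define c where "c = Fwp - gp"
  define e where "e = h - Fzh"
  define A where "A = (norm a)\<^sup>2"
  define C where "C = (norm c)\<^sup>2"
  define E where "E = (norm e)\<^sup>2"
  have L: "L > 0" using mu by simp
  have I1: "N1 = N0 - Znw + 2 * ((zn - w) \<bullet> (zn - zs))"
    unfolding N1_def N0_def Znw_def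
    by (simp add: power2_norm_eq_inner inner_simps inner_commute algebra_simps)
  have I2: "2 * ((zh - w) \<bullet> (zn - zh)) = Znw - H - Q"
    unfolding H_def Q_def Znw_def
    by (simp add: power2_norm_eq_inner inner_simps inner_commute algebra_simps)
  have P1: "(zn - w) \<bullet> (zn - zs) \<le> (- \<alpha> *\<^sub>R h + \<gamma> *\<^sub>R (w - wp) - \<tau> *\<^sub>R (gk - gp)) \<bullet> (zn - zs)"
  proof -
    have "(w - \<alpha> *\<^sub>R h + \<gamma> *\<^sub>R (w - wp) - \<tau> *\<^sub>R (gk - gp) - zn) \<bullet> (zs - zn)
      = (zn - w) \<bullet> (zn - zs) - (- \<alpha> *\<^sub>R h + \<gamma> *\<^sub>R (w - wp) - \<tau> *\<^sub>R (gk - gp)) \<bullet> (zn - zs)"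
      by (simp add: inner_simps inner_commute algebra_simps)
    with H1 show ?thesis by linarith
  qed
  have P2: "- \<eta> * (gk \<bullet> (zn - zh)) \<le> (zh - w) \<bullet> (zn - zh) - \<beta> * ((w - wp) \<bullet> (zn - zh))"
  proof -
    have "(w + \<beta> *\<^sub>R (w - wp) - \<eta> *\<^sub>R gk - zh) \<bullet> (zn - zh)
       = - ((zh - w) \<bullet> (zn - zh)) + \<beta> * ((w - wp) \<bullet> (zn - zh)) - \<eta> * (gk \<bullet> (zn - zh))"
      by (simp add: inner_simps inner_commute algebra_simps)
    with H2 show ?thesis by linarith
  qed
  have Ex: "(- \<alpha> *\<^sub>R h + \<gamma> *\<^sub>R (w - wp) - \<tau> *\<^sub>R (gk - gp)) \<bullet> (zn - zs)
     = - \<alpha> * ((h - gk) \<bullet> (zn - zh)) - \<alpha> * (gk \<bullet> (zn - zh)) - \<alpha> * (h \<bullet> (zh - zs))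
       + \<gamma> * ((w - wp) \<bullet> (zn - zh)) + \<gamma> * ((w - wp) \<bullet> (zh - zs)) - \<tau> * ((gk - gp) \<bullet> (zn - zs))"
    by (simp add: inner_simps inner_commute algebra_simps)
  have S1: "N1 \<le> N0 - H - Q + 2 * (- \<alpha> * ((h - gk) \<bullet> (zn - zh))) + 2 * (\<eta> - \<alpha>) * ((zn - zh) \<bullet> gk)
       + 2 * ((\<gamma> - \<beta>) * ((w - wp) \<bullet> (zn - zh))) - 2 * \<alpha> * (h \<bullet> (zh - zs))
       + 2 * (\<gamma> * ((w - wp) \<bullet> (zh - zs))) - 2 * (\<tau> * ((gk - gp) \<bullet> (zn - zs)))"
    using I1 I2 P1 P2 Ex by (simp add: inner_commute algebra_simps)
  have B1: "2 * (- \<alpha> * ((h - gk) \<bullet> (zn - zh))) \<le> \<alpha>\<^sup>2 * (norm (h - gk))\<^sup>2 + Q"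
  proof -
    have n: "(norm (\<alpha> *\<^sub>R (gk - h)))\<^sup>2 = \<alpha>\<^sup>2 * (norm (h - gk))\<^sup>2"
      by (simp add: power_mult_distrib norm_minus_commute)
    have "2 * ((\<alpha> *\<^sub>R (gk - h)) \<bullet> (zn - zh)) \<le> (norm (\<alpha> *\<^sub>R (gk - h)))\<^sup>2 + Q"
      using young[of 1 "\<alpha> *\<^sub>R (gk - h)" "zn - zh"] unfolding Q_def by (simp only: mult_1 div_by_1 zero_less_one)
    moreover have "(\<alpha> *\<^sub>R (gk - h)) \<bullet> (zn - zh) = - \<alpha> * ((h - gk) \<bullet> (zn - zh))"
      by (simp add: inner_simps algebra_simps)
    ultimately show ?thesis using n by linarith
  qed
  have B1': "(norm (h - gk))\<^sup>2 \<le> 2 * L\<^sup>2 * H + 4 * E + 4 * A"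
  proof -
    have "h - gk = (Fzh - Fw) + (e - a)" unfolding e_def a_def by simp
    then have "(norm (h - gk))\<^sup>2 \<le> 2 * (norm (Fzh - Fw))\<^sup>2 + 2 * (norm (e - a))\<^sup>2"
      using sq_add by metis
    moreover have "(norm (e - a))\<^sup>2 \<le> 2 * E + 2 * A" unfolding E_def A_def by (rule sq_diff)
    moreover have "(norm (Fzh - Fw))\<^sup>2 \<le> L\<^sup>2 * H"
    proof -
      have "(norm (Fzh - Fw))\<^sup>2 \<le> (L * norm (zh - w))\<^sup>2"
        using H5 by (intro power_mono) auto
      then show ?thesis unfolding H_def by (simp add: power_mult_distrib)
    qed
    ultimately show ?thesis by linarith
  qed
  have B1'': "\<alpha>\<^sup>2 * (norm (h - gk))\<^sup>2 \<le> \<alpha>\<^sup>2 * (2 * L\<^sup>2 * H + 4 * E + 4 * A)"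
    using B1' by (intro mult_left_mono) auto
  have B2a: "2 * ((\<gamma> - \<beta>) * ((w - wp) \<bullet> (zn - zh))) \<le> g * (W + Q)"
  proof -
    have "2 * ((\<gamma> - \<beta>) * ((w - wp) \<bullet> (zn - zh))) \<le> g * (2 * \<bar>(w - wp) \<bullet> (zn - zh)\<bar>)"
    proof -
      define t where "t = (w - wp) \<bullet> (zn - zh)"
      have "(\<gamma> - \<beta>) * t \<le> \<bar>(\<gamma> - \<beta>) * t\<bar>" by (rule abs_ge_self)
      also have "\<dots> = g * \<bar>t\<bar>" unfolding g_def by (rule abs_mult)
      finally have "(\<gamma> - \<beta>) * t \<le> g * \<bar>t\<bar>" .
      moreover have "g * (2 * \<bar>t\<bar>) = 2 * (g * \<bar>t\<bar>)" by simp
      ultimately show ?thesis unfolding t_def[symmetric] by linarith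
    qed
    also have "\<dots> \<le> g * (W + Q)"
    proof (rule mult_left_mono)
      have "\<bar>(w - wp) \<bullet> (zn - zh)\<bar> \<le> norm (w - wp) * norm (zn - zh)" by (rule Cauchy_Schwarz_ineq2)
      moreover have "2 * (norm (w - wp) * norm (zn - zh)) \<le> W + Q"
        unfolding W_def Q_def using sum_squares_bound[of "norm (w - wp)" "norm (zn - zh)"]
        by (simp add: power2_eq_square)
      ultimately show "2 * \<bar>(w - wp) \<bullet> (zn - zh)\<bar> \<le> W + Q" by linarith
    qed (simp add: g_def)
    finally show ?thesis .
  qed
  have Wb: "W \<le> 2 * N0 + 2 * Np"
    unfolding W_def N0_def Np_def using sq_diff[of "w - zs" "wp - zs"] by simp
  have Znwb: "Znw \<le> 2 * N1 + 2 * N0"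
    unfolding Znw_def N1_def N0_def using sq_diff[of "zn - zs" "w - zs"] by simp
  have Qb: "Q \<le> 2 * Znw + 2 * H"
    unfolding Znw_def Q_def H_def using sq_diff[of "zn - w" "zh - w"] by simp
  have B2: "2 * ((\<gamma> - \<beta>) * ((w - wp) \<bullet> (zn - zh))) \<le> g * (2 * N0 + 2 * Np + 4 * N1 + 4 * N0 + 2 * H)"
  proof -
    have "W + Q \<le> 2 * N0 + 2 * Np + 4 * N1 + 4 * N0 + 2 * H" using Wb Znwb Qb by linarith
    then have "g * (W + Q) \<le> g * (2 * N0 + 2 * Np + 4 * N1 + 4 * N0 + 2 * H)"
      by (intro mult_left_mono) (auto simp: g_def)
    with B2a show ?thesis by linarith
  qed
  have Zhb: "N0 \<le> 2 * Zh + 2 * H"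
    unfolding N0_def Zh_def H_def using sq_diff[of "zh - zs" "zh - w"] by simp
  have B3a: "h \<bullet> (zh - zs) \<ge> \<mu> * Zh + e \<bullet> (zh - zs)"
  proof -
    have "h \<bullet> (zh - zs) = (Fzh - Fzs) \<bullet> (zh - zs) + Fzs \<bullet> (zh - zs) + e \<bullet> (zh - zs)"
      unfolding e_def by (simp add: inner_simps)
    with H3 H4 show ?thesis unfolding Zh_def by linarith
  qed
  have B3: "- 2 * \<alpha> * (h \<bullet> (zh - zs)) \<le> - \<alpha> * \<mu> * N0 + 2 * \<alpha> * \<mu> * H - 2 * \<alpha> * (e \<bullet> (zh - zs))"
  proof -
    have "\<alpha> * (\<mu> * Zh + e \<bullet> (zh - zs)) \<le> \<alpha> * (h \<bullet> (zh - zs))"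
      using B3a par by (intro mult_left_mono) auto
    moreover have "\<alpha> * \<mu> * N0 \<le> \<alpha> * \<mu> * (2 * Zh + 2 * H)"
      using Zhb par mu by (intro mult_left_mono) auto
    ultimately show ?thesis by (simp add: algebra_simps)
  qed
  have B4: "2 * (\<gamma> * ((w - wp) \<bullet> (zh - zs))) \<le> \<gamma> * (4 * N0 + 2 * Np + 2 * H)"
  proof -
    have "2 * ((w - wp) \<bullet> (zh - zs)) \<le> W + Zh"
      using young[of 1 "w - wp" "zh - zs"] unfolding W_def Zh_def by simp
    moreover have "Zh \<le> 2 * H + 2 * N0"
      unfolding Zh_def H_def N0_def using sq_add[of "zh - w" "w - zs"] by simp
    ultimately have "2 * ((w - wp) \<bullet> (zh - zs)) \<le> 4 * N0 + 2 * Np + 2 * H" using Wb by linarith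
    then have "\<gamma> * (2 * ((w - wp) \<bullet> (zh - zs))) \<le> \<gamma> * (4 * N0 + 2 * Np + 2 * H)"
      using par by (intro mult_left_mono) auto
    then show ?thesis by (simp add: algebra_simps)
  qed
  have Dg: "(norm (gk - gp))\<^sup>2 \<le> 4 * L\<^sup>2 * N0 + 4 * L\<^sup>2 * Np + 4 * A + 4 * C"
  proof -
    have "gk - gp = (Fw - Fwp) + (a + c)" unfolding a_def c_def by simp
    then have "(norm (gk - gp))\<^sup>2 \<le> 2 * (norm (Fw - Fwp))\<^sup>2 + 2 * (norm (a + c))\<^sup>2"
      using sq_add by metis
    moreover have "(norm (a + c))\<^sup>2 \<le> 2 * A + 2 * C" unfolding A_def C_def by (rule sq_add)
    moreover have "(norm (Fw - Fwp))\<^sup>2 \<le> L\<^sup>2 * W"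
    proof -
      have "(norm (Fw - Fwp))\<^sup>2 \<le> (L * norm (w - wp))\<^sup>2"
        using H6 by (intro power_mono) auto
      then show ?thesis unfolding W_def by (simp add: power_mult_distrib)
    qed
    moreover have "L\<^sup>2 * W \<le> L\<^sup>2 * (2 * N0 + 2 * Np)" using Wb by (intro mult_left_mono) auto
    ultimately show ?thesis by (simp add: algebra_simps)
  qed
  have B5: "- 2 * (\<tau> * ((gk - gp) \<bullet> (zn - zs))) \<le> \<tau> * L * N1 + \<tau> * (4 * L * N0 + 4 * L * Np) + 4 * (\<tau> / L) * (A + C)"
  proof -
    have y: "2 * ((gp - gk) \<bullet> (zn - zs)) \<le> (1 / L) * (norm (gp - gk))\<^sup>2 + (norm (zn - zs))\<^sup>2 / (1 / L)"
      using young[of "1/L" "gp - gk" "zn - zs"] L by simp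
    have nn: "(norm (gp - gk))\<^sup>2 = (norm (gk - gp))\<^sup>2" by (simp add: norm_minus_commute)
    have m: "(1 / L) * (norm (gk - gp))\<^sup>2 \<le> (1 / L) * (4 * L\<^sup>2 * N0 + 4 * L\<^sup>2 * Np + 4 * A + 4 * C)"
      using Dg L by (intro mult_left_mono) auto
    have q: "(norm (zn - zs))\<^sup>2 / (1 / L) = L * N1" unfolding N1_def by simp
    have "2 * ((gp - gk) \<bullet> (zn - zs)) \<le> (1 / L) * (4 * L\<^sup>2 * N0 + 4 * L\<^sup>2 * Np + 4 * A + 4 * C) + L * N1"
    proof -
      have "2 * ((gp - gk) \<bullet> (zn - zs)) \<le> (1 / L) * (norm (gk - gp))\<^sup>2 + L * N1"
        using y by (simp only: nn q)
      then show ?thesis using add_right_mono[OF m, of "L * N1"] by (rule order_trans)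
    qed
    also have "(1 / L) * (4 * L\<^sup>2 * N0 + 4 * L\<^sup>2 * Np + 4 * A + 4 * C) = 4 * L * N0 + 4 * L * Np + 4 * (A + C) / L"
      using L by (simp add: field_simps power2_eq_square)
    finally have "2 * ((gp - gk) \<bullet> (zn - zs)) \<le> 4 * L * N0 + 4 * L * Np + 4 * (A + C) / L + L * N1" .
    then have "\<tau> * (2 * ((gp - gk) \<bullet> (zn - zs))) \<le> \<tau> * (4 * L * N0 + 4 * L * Np + 4 * (A + C) / L + L * N1)"
      using par by (intro mult_left_mono) auto
    then show ?thesis by (simp add: algebra_simps inner_simps)
  qed
  have "N1 \<le> N0 - H - Q + (\<alpha>\<^sup>2 * (2 * L\<^sup>2 * H + 4 * E + 4 * A) + Q)
       + 2 * (\<eta> - \<alpha>) * ((zn - zh) \<bullet> gk)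
       + g * (2 * N0 + 2 * Np + 4 * N1 + 4 * N0 + 2 * H)
       + (- \<alpha> * \<mu> * N0 + 2 * \<alpha> * \<mu> * H - 2 * \<alpha> * (e \<bullet> (zh - zs)))
       + \<gamma> * (4 * N0 + 2 * Np + 2 * H)
       + (\<tau> * L * N1 + \<tau> * (4 * L * N0 + 4 * L * Np) + 4 * (\<tau> / L) * (A + C))"
    using S1 B1 B1'' B2 B3 B4 B5 by linarith
  then show ?thesis
    unfolding g_def[symmetric] N1_def[symmetric] N0_def[symmetric] Np_def[symmetric] H_def[symmetric]
      e_def[symmetric] a_def[symmetric] c_def[symmetric] A_def[symmetric] C_def[symmetric] E_def[symmetric]
    by (simp add: algebra_simps power2_eq_square)
qed



lemma pps: "prob_space \<Xi> \<Longrightarrow> product_prob_space (\<lambda>_::nat. \<Xi>)"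
  by (simp add: product_prob_space_def product_prob_space_axioms_def product_sigma_finite_def
      prob_space_imp_sigma_finite)

lemma indep_nn:
  fixes \<Xi> :: "'s measure" and X :: "(nat \<Rightarrow> 's) \<Rightarrow> 'b" and \<phi> :: "'b \<times> 's \<Rightarrow> ennreal"
  assumes prob: "prob_space \<Xi>" and K: "finite K" "j \<notin> K"
    and Xm: "X \<in> measurable (PiM K (\<lambda>_. \<Xi>)) N"
    and Xr: "\<And>\<omega>. X (restrict \<omega> K) = X \<omega>"
    and \<phi>m: "\<phi> \<in> borel_measurable (N \<Otimes>\<^sub>M \<Xi>)"
  shows "(\<integral>\<^sup>+\<omega>. \<phi> (X \<omega>, \<omega> j) \<partial>(PiM UNIV (\<lambda>_. \<Xi>)))
       = (\<integral>\<^sup>+\<omega>. (\<integral>\<^sup>+s. \<phi> (X \<omega>, s) \<partial>\<Xi>) \<partial>(PiM UNIV (\<lambda>_. \<Xi>)))"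
proof -
  interpret P: product_prob_space "\<lambda>_::nat. \<Xi>" UNIV using pps[OF prob] .
  interpret S: prob_space \<Xi> by (rule prob)
  define J where "J = insert j K"
  have J: "finite J" "K \<subseteq> J" "j \<in> J" using K by (auto simp: J_def)
  define f where "f x = \<phi> (X (restrict x K), x j)" for x :: "nat \<Rightarrow> 's"
  have fm: "f \<in> borel_measurable (PiM J (\<lambda>_. \<Xi>))"
    unfolding f_def
    by (rule measurable_compose[OF measurable_Pair[OF measurable_compose[OF measurable_restrict_subset[OF J(2)] Xm]
          measurable_component_singleton[OF J(3)]] \<phi>m])
  define G where "G x = (\<integral>\<^sup>+s. \<phi> (X (restrict x K), s) \<partial>\<Xi>)" for x :: "nat \<Rightarrow> 's"
  have Gm: "G \<in> borel_measurable (PiM K (\<lambda>_. \<Xi>))"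
    unfolding G_def
  proof (rule sigma_finite_measure.borel_measurable_nn_integral[OF prob_space_imp_sigma_finite[OF prob]])
    show "(\<lambda>(x, s). \<phi> (X (restrict x K), s)) \<in> borel_measurable (PiM K (\<lambda>_. \<Xi>) \<Otimes>\<^sub>M \<Xi>)"
      unfolding case_prod_unfold
      by (rule measurable_compose[OF measurable_Pair[OF measurable_compose[OF measurable_compose[OF measurable_fst
            measurable_restrict_subset[OF subset_refl]] Xm] measurable_snd] \<phi>m])
  qed
  have "(\<integral>\<^sup>+\<omega>. \<phi> (X \<omega>, \<omega> j) \<partial>(PiM UNIV (\<lambda>_. \<Xi>))) = (\<integral>\<^sup>+\<omega>. f (restrict \<omega> J) \<partial>(PiM UNIV (\<lambda>_. \<Xi>)))"
  proof (rule nn_integral_cong)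
    fix \<omega> :: "nat \<Rightarrow> 's"
    have "restrict (restrict \<omega> J) K = restrict \<omega> K" using J(2) by (auto simp: restrict_def fun_eq_iff)
    then show "\<phi> (X \<omega>, \<omega> j) = f (restrict \<omega> J)" using J(3) by (simp add: f_def Xr)
  qed
  also have "\<dots> = integral\<^sup>N (distr (PiM UNIV (\<lambda>_. \<Xi>)) (PiM J (\<lambda>_. \<Xi>)) (\<lambda>x. restrict x J)) f"
    by (rule nn_integral_distr[symmetric, OF measurable_restrict_subset]) (simp_all add: fm)
  also have "\<dots> = integral\<^sup>N (PiM J (\<lambda>_. \<Xi>)) f"
    using J by (simp add: P.distr_PiM_restrict_finite)
  also have "\<dots> = (\<integral>\<^sup>+x. (\<integral>\<^sup>+y. f (x(j := y)) \<partial>\<Xi>) \<partial>PiM K (\<lambda>_. \<Xi>))"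
    unfolding J_def by (rule P.product_nn_integral_insert) (use K fm J_def in auto)
  also have "\<dots> = integral\<^sup>N (PiM K (\<lambda>_. \<Xi>)) G"
  proof (rule nn_integral_cong)
    fix x
    show "(\<integral>\<^sup>+y. f (x(j := y)) \<partial>\<Xi>) = G x"
      unfolding G_def f_def
    proof (rule nn_integral_cong)
      fix y
      have "restrict (x(j := y)) K = restrict x K" using K by (auto simp: restrict_def)
      then show "\<phi> (X (restrict (x(j := y)) K), (x(j := y)) j) = \<phi> (X (restrict x K), y)" by simp
    qed
  qed
  also have "\<dots> = integral\<^sup>N (distr (PiM UNIV (\<lambda>_. \<Xi>)) (PiM K (\<lambda>_. \<Xi>)) (\<lambda>x. restrict x K)) G"
    using K by (simp add: P.distr_PiM_restrict_finite)
  also have "\<dots> = (\<integral>\<^sup>+\<omega>. G (restrict \<omega> K) \<partial>(PiM UNIV (\<lambda>_. \<Xi>)))"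
    by (rule nn_integral_distr[OF measurable_restrict_subset]) (simp_all add: Gm)
  also have "\<dots> = (\<integral>\<^sup>+\<omega>. (\<integral>\<^sup>+s. \<phi> (X \<omega>, s) \<partial>\<Xi>) \<partial>(PiM UNIV (\<lambda>_. \<Xi>)))"
    unfolding G_def by (simp add: Xr)
  finally show ?thesis .
qed

lemma indep_int:
  fixes \<Xi> :: "'s measure" and X :: "(nat \<Rightarrow> 's) \<Rightarrow> 'b" and \<phi> :: "'b \<times> 's \<Rightarrow> real"
  assumes prob: "prob_space \<Xi>" and K: "finite K" "j \<notin> K"
    and Xm: "X \<in> measurable (PiM K (\<lambda>_. \<Xi>)) N"
    and Xr: "\<And>\<omega>. X (restrict \<omega> K) = X \<omega>"
    and \<phi>m: "\<phi> \<in> borel_measurable (N \<Otimes>\<^sub>M \<Xi>)"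
    and int: "integrable (PiM UNIV (\<lambda>_. \<Xi>)) (\<lambda>\<omega>. \<phi> (X \<omega>, \<omega> j))"
  shows "(\<integral>\<omega>. \<phi> (X \<omega>, \<omega> j) \<partial>(PiM UNIV (\<lambda>_. \<Xi>)))
       = (\<integral>\<omega>. (\<integral>s. \<phi> (X \<omega>, s) \<partial>\<Xi>) \<partial>(PiM UNIV (\<lambda>_. \<Xi>)))"
proof -
  interpret P: product_prob_space "\<lambda>_::nat. \<Xi>" UNIV using pps[OF prob] .
  interpret S: prob_space \<Xi> by (rule prob)
  define J where "J = insert j K"
  have J: "finite J" "K \<subseteq> J" "j \<in> J" using K by (auto simp: J_def)
  define f where "f x = \<phi> (X (restrict x K), x j)" for x :: "nat \<Rightarrow> 's"
  have fm: "f \<in> borel_measurable (PiM J (\<lambda>_. \<Xi>))"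
    unfolding f_def
    by (rule measurable_compose[OF measurable_Pair[OF measurable_compose[OF measurable_restrict_subset[OF J(2)] Xm]
          measurable_component_singleton[OF J(3)]] \<phi>m])
  define G where "G x = (\<integral>s. \<phi> (X (restrict x K), s) \<partial>\<Xi>)" for x :: "nat \<Rightarrow> 's"
  have Gm: "G \<in> borel_measurable (PiM K (\<lambda>_. \<Xi>))"
    unfolding G_def
  proof (rule sigma_finite_measure.borel_measurable_lebesgue_integral[OF prob_space_imp_sigma_finite[OF prob]])
    show "(\<lambda>(x, s). \<phi> (X (restrict x K), s)) \<in> borel_measurable (PiM K (\<lambda>_. \<Xi>) \<Otimes>\<^sub>M \<Xi>)"
      unfolding case_prod_unfold
      by (rule measurable_compose[OF measurable_Pair[OF measurable_compose[OF measurable_compose[OF measurable_fst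
            measurable_restrict_subset[OF subset_refl]] Xm] measurable_snd] \<phi>m])
  qed
  have eq1: "\<And>\<omega>. \<phi> (X \<omega>, \<omega> j) = f (restrict \<omega> J)"
  proof -
    fix \<omega> :: "nat \<Rightarrow> 's"
    have "restrict (restrict \<omega> J) K = restrict \<omega> K" using J(2) by (auto simp: restrict_def fun_eq_iff)
    then show "\<phi> (X \<omega>, \<omega> j) = f (restrict \<omega> J)" using J(3) by (simp add: f_def Xr)
  qed
  have rm: "(\<lambda>x. restrict x J) \<in> measurable (PiM UNIV (\<lambda>_. \<Xi>)) (PiM J (\<lambda>_. \<Xi>))"
    by (rule measurable_restrict_subset) simp
  have intJ: "integrable (PiM J (\<lambda>_. \<Xi>)) f"
  proof -
    have "integrable (distr (PiM UNIV (\<lambda>_. \<Xi>)) (PiM J (\<lambda>_. \<Xi>)) (\<lambda>x. restrict x J)) f"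
      using int unfolding eq1 by (subst integrable_distr_eq[OF rm fm])
    then show ?thesis using J by (simp add: P.distr_PiM_restrict_finite)
  qed
  have "(\<integral>\<omega>. \<phi> (X \<omega>, \<omega> j) \<partial>(PiM UNIV (\<lambda>_. \<Xi>))) = (\<integral>\<omega>. f (restrict \<omega> J) \<partial>(PiM UNIV (\<lambda>_. \<Xi>)))"
    by (simp add: eq1)
  also have "\<dots> = integral\<^sup>L (distr (PiM UNIV (\<lambda>_. \<Xi>)) (PiM J (\<lambda>_. \<Xi>)) (\<lambda>x. restrict x J)) f"
    by (rule integral_distr[symmetric, OF rm fm])
  also have "\<dots> = integral\<^sup>L (PiM J (\<lambda>_. \<Xi>)) f"
    using J by (simp add: P.distr_PiM_restrict_finite)
  also have "\<dots> = (\<integral>x. (\<integral>y. f (x(j := y)) \<partial>\<Xi>) \<partial>PiM K (\<lambda>_. \<Xi>))"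
    unfolding J_def by (rule P.product_integral_insert) (use K intJ J_def in auto)
  also have "\<dots> = integral\<^sup>L (PiM K (\<lambda>_. \<Xi>)) G"
  proof (rule Bochner_Integration.integral_cong[OF refl])
    fix x
    show "(\<integral>y. f (x(j := y)) \<partial>\<Xi>) = G x"
      unfolding G_def f_def
    proof (rule Bochner_Integration.integral_cong[OF refl])
      fix y
      have "restrict (x(j := y)) K = restrict x K" using K by (auto simp: restrict_def)
      then show "\<phi> (X (restrict (x(j := y)) K), (x(j := y)) j) = \<phi> (X (restrict x K), y)" by simp
    qed
  qed
  also have "\<dots> = integral\<^sup>L (distr (PiM UNIV (\<lambda>_. \<Xi>)) (PiM K (\<lambda>_. \<Xi>)) (\<lambda>x. restrict x K)) G"
    using K by (simp add: P.distr_PiM_restrict_finite)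
  also have "\<dots> = (\<integral>\<omega>. G (restrict \<omega> K) \<partial>(PiM UNIV (\<lambda>_. \<Xi>)))"
    by (rule integral_distr[OF measurable_restrict_subset]) (simp_all add: Gm)
  also have "\<dots> = (\<integral>\<omega>. (\<integral>s. \<phi> (X \<omega>, s) \<partial>\<Xi>) \<partial>(PiM UNIV (\<lambda>_. \<Xi>)))"
    unfolding G_def by (simp add: Xr)
  finally show ?thesis .
qed



context
  fixes Z :: "'a::euclidean_space set" and Fh :: "'a \<Rightarrow> 's \<Rightarrow> 'a"
    and \<alpha> \<beta> \<gamma> \<eta> \<tau> :: real and z0 :: 'a
begin

lemma sz0: "sep_z Z Fh \<alpha> \<beta> \<gamma> \<eta> \<tau> z0 \<omega> 0 = z0"
  by (simp add: sep_z_def)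
lemma szp0: "sep_zprev Z Fh \<alpha> \<beta> \<gamma> \<eta> \<tau> z0 \<omega> 0 = z0"
  by (simp add: sep_zprev_def)
lemma szSuc: "sep_z Z Fh \<alpha> \<beta> \<gamma> \<eta> \<tau> z0 \<omega> (Suc k) =
   closest_point Z (sep_z Z Fh \<alpha> \<beta> \<gamma> \<eta> \<tau> z0 \<omega> k
      - \<alpha> *\<^sub>R Fh (sep_zhalf Z Fh \<alpha> \<beta> \<gamma> \<eta> \<tau> z0 \<omega> k) (\<omega> (2 * k + 1))
      + \<gamma> *\<^sub>R (sep_z Z Fh \<alpha> \<beta> \<gamma> \<eta> \<tau> z0 \<omega> k - sep_zprev Z Fh \<alpha> \<beta> \<gamma> \<eta> \<tau> z0 \<omega> k)
      - \<tau> *\<^sub>R (Fh (sep_z Z Fh \<alpha> \<beta> \<gamma> \<eta> \<tau> z0 \<omega> k) (\<omega> (2 * k))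
               - Fh (sep_zprev Z Fh \<alpha> \<beta> \<gamma> \<eta> \<tau> z0 \<omega> k) (\<omega> (sep_prev_idx k))))"
  by (simp add: sep_z_def sep_zprev_def sep_zhalf_def Let_def split: prod.split)
lemma szpSuc: "sep_zprev Z Fh \<alpha> \<beta> \<gamma> \<eta> \<tau> z0 \<omega> (Suc k) = sep_z Z Fh \<alpha> \<beta> \<gamma> \<eta> \<tau> z0 \<omega> k"
  by (simp add: sep_z_def sep_zprev_def Let_def split: prod.split)

lemma sep_iter_dep:
  "(\<And>i. i < 2 * k \<Longrightarrow> \<omega> i = \<omega>' i) \<Longrightarrow> sep_iter Z Fh \<alpha> \<beta> \<gamma> \<eta> \<tau> z0 \<omega> k = sep_iter Z Fh \<alpha> \<beta> \<gamma> \<eta> \<tau> z0 \<omega>' k"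
proof (induction k)
  case 0
  then show ?case by simp
next
  case (Suc k)
  have IH: "sep_iter Z Fh \<alpha> \<beta> \<gamma> \<eta> \<tau> z0 \<omega> k = sep_iter Z Fh \<alpha> \<beta> \<gamma> \<eta> \<tau> z0 \<omega>' k"
    using Suc by auto
  have a: "\<omega> (2 * k) = \<omega>' (2 * k)" "\<omega> (2 * k + 1) = \<omega>' (2 * k + 1)"
    "\<omega> (sep_prev_idx k) = \<omega>' (sep_prev_idx k)"
    using Suc.prems by (auto simp: sep_prev_idx_def)
  show ?case using IH a by (simp add: Let_def split: prod.split)
qed

lemma sz_restrict:
  assumes "{..<2 * k} \<subseteq> K"
  shows "sep_z Z Fh \<alpha> \<beta> \<gamma> \<eta> \<tau> z0 (restrict \<omega> K) k = sep_z Z Fh \<alpha> \<beta> \<gamma> \<eta> \<tau> z0 \<omega> k"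
    "sep_zprev Z Fh \<alpha> \<beta> \<gamma> \<eta> \<tau> z0 (restrict \<omega> K) k = sep_zprev Z Fh \<alpha> \<beta> \<gamma> \<eta> \<tau> z0 \<omega> k"
proof -
  have "sep_iter Z Fh \<alpha> \<beta> \<gamma> \<eta> \<tau> z0 (restrict \<omega> K) k = sep_iter Z Fh \<alpha> \<beta> \<gamma> \<eta> \<tau> z0 \<omega> k"
    by (rule sep_iter_dep) (use assms in auto)
  then show "sep_z Z Fh \<alpha> \<beta> \<gamma> \<eta> \<tau> z0 (restrict \<omega> K) k = sep_z Z Fh \<alpha> \<beta> \<gamma> \<eta> \<tau> z0 \<omega> k"
    "sep_zprev Z Fh \<alpha> \<beta> \<gamma> \<eta> \<tau> z0 (restrict \<omega> K) k = sep_zprev Z Fh \<alpha> \<beta> \<gamma> \<eta> \<tau> z0 \<omega> k"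
    by (simp_all add: sep_z_def sep_zprev_def)
qed

lemma szh_restrict:
  assumes "{..<Suc (2 * k)} \<subseteq> K"
  shows "sep_zhalf Z Fh \<alpha> \<beta> \<gamma> \<eta> \<tau> z0 (restrict \<omega> K) k = sep_zhalf Z Fh \<alpha> \<beta> \<gamma> \<eta> \<tau> z0 \<omega> k"
proof -
  have "{..<2 * k} \<subseteq> K" "2 * k \<in> K" using assms by auto
  then show ?thesis using sz_restrict[of k K \<omega>] by (simp add: sep_zhalf_def Let_def)
qed

lemma sz_in:
  assumes "closed Z" "Z \<noteq> {}" "z0 \<in> Z"
  shows "sep_z Z Fh \<alpha> \<beta> \<gamma> \<eta> \<tau> z0 \<omega> k \<in> Z \<and> sep_zprev Z Fh \<alpha> \<beta> \<gamma> \<eta> \<tau> z0 \<omega> k \<in> Z"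
proof (induction k)
  case 0
  then show ?case using assms by (simp add: sz0 szp0)
next
  case (Suc k)
  then show ?case using assms by (simp add: szSuc szpSuc closest_point_in_set)
qed

lemma szh_in:
  assumes "closed Z" "Z \<noteq> {}"
  shows "sep_zhalf Z Fh \<alpha> \<beta> \<gamma> \<eta> \<tau> z0 \<omega> k \<in> Z"
  using assms by (simp add: sep_zhalf_def Let_def closest_point_in_set)

lemma Fh_comp:
  assumes Fh_meas: "(\<lambda>(z, s). Fh z s) \<in> borel_measurable (borel \<Otimes>\<^sub>M \<Xi>)"
    and X: "X \<in> borel_measurable N" and Y: "Y \<in> measurable N \<Xi>"
  shows "(\<lambda>\<omega>. Fh (X \<omega>) (Y \<omega>)) \<in> borel_measurable N"
proof -
  have "(\<lambda>\<omega>. (\<lambda>(z, s). Fh z s) (X \<omega>, Y \<omega>)) \<in> borel_measurable N"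
    by (rule measurable_compose[OF measurable_Pair[OF X Y] Fh_meas])
  then show ?thesis by simp
qed

lemma cp_comp:
  assumes "closed Z" "convex Z" "Z \<noteq> {}" and X: "X \<in> borel_measurable N"
  shows "(\<lambda>\<omega>. closest_point Z (X \<omega>)) \<in> borel_measurable N"
proof -
  have "closest_point Z \<in> borel_measurable borel"
    by (rule borel_measurable_continuous_onI, rule continuous_on_closest_point) (use assms in auto)
  from measurable_compose[OF X this] show ?thesis by simp
qed

lemma sz_meas:
  assumes Z: "closed Z" "convex Z" "Z \<noteq> {}"
    and Fh_meas: "(\<lambda>(z, s). Fh z s) \<in> borel_measurable (borel \<Otimes>\<^sub>M \<Xi>)"
  shows "{..<2 * k} \<subseteq> K \<Longrightarrow>
    (\<lambda>\<omega>. sep_z Z Fh \<alpha> \<beta> \<gamma> \<eta> \<tau> z0 \<omega> k) \<in> borel_measurable (PiM K (\<lambda>_. \<Xi>)) \<and>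
    (\<lambda>\<omega>. sep_zprev Z Fh \<alpha> \<beta> \<gamma> \<eta> \<tau> z0 \<omega> k) \<in> borel_measurable (PiM K (\<lambda>_. \<Xi>))"
proof (induction k)
  case 0
  then show ?case by (simp add: sz0 szp0)
next
  case (Suc k)
  then have K: "{..<2 * k} \<subseteq> K" "2 * k \<in> K" "2 * k + 1 \<in> K" "sep_prev_idx k \<in> K"
    by (auto simp: sep_prev_idx_def)
  from Suc.IH[OF K(1)] have zm: "(\<lambda>\<omega>. sep_z Z Fh \<alpha> \<beta> \<gamma> \<eta> \<tau> z0 \<omega> k) \<in> borel_measurable (PiM K (\<lambda>_. \<Xi>))"
    and zpm: "(\<lambda>\<omega>. sep_zprev Z Fh \<alpha> \<beta> \<gamma> \<eta> \<tau> z0 \<omega> k) \<in> borel_measurable (PiM K (\<lambda>_. \<Xi>))" by auto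
  have c: "(\<lambda>\<omega>. \<omega> i) \<in> measurable (PiM K (\<lambda>_. \<Xi>)) \<Xi>" if "i \<in> K" for i
    using measurable_component_singleton[OF that, of "\<lambda>_. \<Xi>"] by simp
  have gk: "(\<lambda>\<omega>. Fh (sep_z Z Fh \<alpha> \<beta> \<gamma> \<eta> \<tau> z0 \<omega> k) (\<omega> (2 * k))) \<in> borel_measurable (PiM K (\<lambda>_. \<Xi>))"
    by (rule Fh_comp[OF Fh_meas zm c[OF K(2)]])
  have gp: "(\<lambda>\<omega>. Fh (sep_zprev Z Fh \<alpha> \<beta> \<gamma> \<eta> \<tau> z0 \<omega> k) (\<omega> (sep_prev_idx k))) \<in> borel_measurable (PiM K (\<lambda>_. \<Xi>))"
    by (rule Fh_comp[OF Fh_meas zpm c[OF K(4)]])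
  have zh: "(\<lambda>\<omega>. sep_zhalf Z Fh \<alpha> \<beta> \<gamma> \<eta> \<tau> z0 \<omega> k) \<in> borel_measurable (PiM K (\<lambda>_. \<Xi>))"
    unfolding sep_zhalf_def Let_def
    by (rule cp_comp[OF Z], intro borel_measurable_add borel_measurable_diff borel_measurable_scaleR zm zpm gk measurable_const, simp_all)
  have h: "(\<lambda>\<omega>. Fh (sep_zhalf Z Fh \<alpha> \<beta> \<gamma> \<eta> \<tau> z0 \<omega> k) (\<omega> (2 * k + 1))) \<in> borel_measurable (PiM K (\<lambda>_. \<Xi>))"
    by (rule Fh_comp[OF Fh_meas zh c[OF K(3)]])
  have "(\<lambda>\<omega>. sep_z Z Fh \<alpha> \<beta> \<gamma> \<eta> \<tau> z0 \<omega> (Suc k)) \<in> borel_measurable (PiM K (\<lambda>_. \<Xi>))"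
    unfolding szSuc
    by (rule cp_comp[OF Z], intro borel_measurable_add borel_measurable_diff borel_measurable_scaleR zm zpm gk gp h measurable_const, simp_all)
  then show ?case using zm by (simp add: szpSuc)
qed

lemma szh_meas:
  assumes Z: "closed Z" "convex Z" "Z \<noteq> {}"
    and Fh_meas: "(\<lambda>(z, s). Fh z s) \<in> borel_measurable (borel \<Otimes>\<^sub>M \<Xi>)"
    and K: "{..<Suc (2 * k)} \<subseteq> K"
  shows "(\<lambda>\<omega>. sep_zhalf Z Fh \<alpha> \<beta> \<gamma> \<eta> \<tau> z0 \<omega> k) \<in> borel_measurable (PiM K (\<lambda>_. \<Xi>))"
proof -
  have K': "{..<2 * k} \<subseteq> K" "2 * k \<in> K" using K by auto
  from sz_meas[OF Z Fh_meas K'(1)] have zm: "(\<lambda>\<omega>. sep_z Z Fh \<alpha> \<beta> \<gamma> \<eta> \<tau> z0 \<omega> k) \<in> borel_measurable (PiM K (\<lambda>_. \<Xi>))"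
    and zpm: "(\<lambda>\<omega>. sep_zprev Z Fh \<alpha> \<beta> \<gamma> \<eta> \<tau> z0 \<omega> k) \<in> borel_measurable (PiM K (\<lambda>_. \<Xi>))" by auto
  have gk: "(\<lambda>\<omega>. Fh (sep_z Z Fh \<alpha> \<beta> \<gamma> \<eta> \<tau> z0 \<omega> k) (\<omega> (2 * k))) \<in> borel_measurable (PiM K (\<lambda>_. \<Xi>))"
    by (rule Fh_comp[OF Fh_meas zm]) (use measurable_component_singleton[OF K'(2), of "\<lambda>_. \<Xi>"] in simp)
  show ?thesis
    unfolding sep_zhalf_def Let_def
    by (rule cp_comp[OF Z], intro borel_measurable_add borel_measurable_diff borel_measurable_scaleR zm zpm gk measurable_const, simp_all)
qed

end

lemma int_lower_bound:
  fixes f :: "'b \<Rightarrow> real"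
  assumes "prob_space M" "\<And>x. c \<le> f x" "c \<le> 0"
  shows "c \<le> integral\<^sup>L M f"
proof (cases "integrable M f")
  case True
  interpret prob_space M by fact
  have "integral\<^sup>L M (\<lambda>_. c) \<le> integral\<^sup>L M f"
    by (rule integral_mono) (use True assms in auto)
  then show ?thesis using prob_space by simp
next
  case False
  then show ?thesis using assms by (simp add: not_integrable_integral_eq)
qed

context
  fixes Z :: "'a::euclidean_space set" and F :: "'a \<Rightarrow> 'a" and Fh :: "'a \<Rightarrow> 's \<Rightarrow> 'a"
    and \<Xi> :: "'s measure" and \<delta> \<sigma> D L :: real and zstar :: 'a
  assumes Z: "closed Z" "convex Z" "Z \<noteq> {}"
    and prob: "prob_space \<Xi>"
    and Fh_meas: "(\<lambda>(z, s). Fh z s) \<in> borel_measurable (borel \<Otimes>\<^sub>M \<Xi>)"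
    and bias: "\<forall>z\<in>Z. (\<integral>\<^sup>+ s. ennreal (norm (Fh z s - F z)) \<partial>\<Xi>) \<le> ennreal \<delta>"
    and var: "\<forall>z\<in>Z. (\<integral>\<^sup>+ s. ennreal ((norm (Fh z s - F z))\<^sup>2) \<partial>\<Xi>) \<le> ennreal (\<sigma>\<^sup>2)"
    and noise: "\<delta> \<ge> 0" "\<sigma> \<ge> 0"
    and diam: "\<forall>z\<in>Z. \<forall>z'\<in>Z. norm (z - z') \<le> D"
    and Lpos: "0 < L"
    and lip: "\<forall>z\<in>Z. \<forall>z'\<in>Z. norm (F z - F z') \<le> L * norm (z - z')"
    and zsZ: "zstar \<in> Z"
begin

lemma Fc_meas: "(\<lambda>x. F (closest_point Z x)) \<in> borel_measurable borel"
proof (rule borel_measurable_continuous_onI)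
  have "continuous_on Z F"
  proof (rule lipschitz_on_continuous_on)
    show "L-lipschitz_on Z F"
      by (rule lipschitz_onI) (use lip Lpos in \<open>auto simp: dist_norm\<close>)
  qed
  moreover have "continuous_on UNIV (closest_point Z)" by (rule continuous_on_closest_point[OF Z(2) Z(1) Z(3)])
  moreover have "closest_point Z ` UNIV \<subseteq> Z" using closest_point_in_set[OF Z(1,3)] by auto
  ultimately show "continuous_on UNIV (\<lambda>x. F (closest_point Z x))"
    by (metis continuous_on_compose2)
qed

lemma psi_meas: "(\<lambda>p. Fh (fst p) (snd p) - F (closest_point Z (fst p))) \<in> borel_measurable (borel \<Otimes>\<^sub>M \<Xi>)"
proof (rule borel_measurable_diff)
  show "(\<lambda>p. Fh (fst p) (snd p)) \<in> borel_measurable (borel \<Otimes>\<^sub>M \<Xi>)"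
    using Fh_meas by (simp add: case_prod_unfold)
  show "(\<lambda>p. F (closest_point Z (fst p))) \<in> borel_measurable (borel \<Otimes>\<^sub>M \<Xi>)"
    by (rule measurable_compose[OF measurable_fst Fc_meas])
qed

lemma inner_bias:
  assumes x: "x \<in> Z"
  shows "- (\<delta> * D) \<le> (\<integral>s. (Fh x s - F (closest_point Z x)) \<bullet> (x - zstar) \<partial>\<Xi>)"
proof -
  have Fc: "F (closest_point Z x) = F x" using x by (simp add: closest_point_self)
  have em: "(\<lambda>s. Fh x s - F x) \<in> borel_measurable \<Xi>"
  proof -
    have "(\<lambda>s. (x, s)) \<in> measurable \<Xi> (borel \<Otimes>\<^sub>M \<Xi>)" by measurable
    from measurable_compose[OF this psi_meas] show ?thesis using Fc by simp
  qed
  have nb: "(\<integral>\<^sup>+ s. ennreal (norm (Fh x s - F x)) \<partial>\<Xi>) \<le> ennreal \<delta>" using bias x by auto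
  have ei: "integrable \<Xi> (\<lambda>s. Fh x s - F x)"
    unfolding integrable_iff_bounded using em nb by (auto simp: top_unique order.strict_trans1)
  have "ennreal (norm (\<integral>s. Fh x s - F x \<partial>\<Xi>)) \<le> (\<integral>\<^sup>+ s. norm (Fh x s - F x) \<partial>\<Xi>)"
    by (rule integral_norm_bound_ennreal[OF ei])
  also have "\<dots> \<le> ennreal \<delta>" by (rule nb)
  finally have n1: "norm (\<integral>s. Fh x s - F x \<partial>\<Xi>) \<le> \<delta>" using noise by (simp add: ennreal_le_iff)
  have n2: "norm (x - zstar) \<le> D" using diam x zsZ by auto
  have "\<bar>(\<integral>s. Fh x s - F x \<partial>\<Xi>) \<bullet> (x - zstar)\<bar> \<le> norm (\<integral>s. Fh x s - F x \<partial>\<Xi>) * norm (x - zstar)"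
    by (rule Cauchy_Schwarz_ineq2)
  also have "\<dots> \<le> \<delta> * D" using n1 n2 noise by (intro mult_mono) auto
  finally have "- (\<delta> * D) \<le> (\<integral>s. Fh x s - F x \<partial>\<Xi>) \<bullet> (x - zstar)" by linarith
  also have "\<dots> = (\<integral>s. (Fh x s - F x) \<bullet> (x - zstar) \<partial>\<Xi>)"
    by (rule integral_inner_left[symmetric]) (use ei in auto)
  finally show ?thesis using Fc by simp
qed

context
  fixes K :: "nat set" and j :: nat and X :: "(nat \<Rightarrow> 's) \<Rightarrow> 'a"
  assumes K: "finite K" "j \<notin> K"
    and Xm: "X \<in> borel_measurable (PiM K (\<lambda>_. \<Xi>))"
    and Xr: "\<And>\<omega>. X (restrict \<omega> K) = X \<omega>"
    and XZ: "\<And>\<omega>. X \<omega> \<in> Z"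
begin

lemma probM: "prob_space (PiM UNIV (\<lambda>_::nat. \<Xi>))"
  by (rule prob_space_PiM) (use prob in auto)

lemma XmU: "X \<in> borel_measurable (PiM UNIV (\<lambda>_. \<Xi>))"
proof -
  have "(\<lambda>\<omega>. X (restrict \<omega> K)) \<in> borel_measurable (PiM UNIV (\<lambda>_. \<Xi>))"
    by (rule measurable_compose[OF measurable_restrict_subset Xm]) simp
  then show ?thesis by (simp add: Xr)
qed

lemma cj: "(\<lambda>\<omega>. \<omega> j) \<in> measurable (PiM UNIV (\<lambda>_. \<Xi>)) \<Xi>"
  using measurable_component_singleton[of j UNIV "\<lambda>_. \<Xi>"] by simp

lemma Fc_X: "F (closest_point Z (X \<omega>)) = F (X \<omega>)"
  using XZ by (simp add: closest_point_self)

lemma em: "(\<lambda>\<omega>. Fh (X \<omega>) (\<omega> j) - F (X \<omega>)) \<in> borel_measurable (PiM UNIV (\<lambda>_. \<Xi>))"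
  using measurable_compose[OF measurable_Pair[OF XmU cj] psi_meas] by (simp add: Fc_X)

lemma noise_sq:
  "integrable (PiM UNIV (\<lambda>_. \<Xi>)) (\<lambda>\<omega>. (norm (Fh (X \<omega>) (\<omega> j) - F (X \<omega>)))\<^sup>2)"
  "(\<integral>\<omega>. (norm (Fh (X \<omega>) (\<omega> j) - F (X \<omega>)))\<^sup>2 \<partial>(PiM UNIV (\<lambda>_. \<Xi>))) \<le> \<sigma>\<^sup>2"
proof -
  let ?M = "PiM UNIV (\<lambda>_::nat. \<Xi>)"
  interpret PM: prob_space ?M by (rule probM)
  let ?\<phi> = "\<lambda>p. ennreal ((norm (Fh (fst p) (snd p) - F (closest_point Z (fst p))))\<^sup>2)"
  have \<phi>m: "?\<phi> \<in> borel_measurable (borel \<Otimes>\<^sub>M \<Xi>)" using psi_meas by measurable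
  have fm: "(\<lambda>\<omega>. (norm (Fh (X \<omega>) (\<omega> j) - F (X \<omega>)))\<^sup>2) \<in> borel_measurable ?M" using em by measurable
  have "(\<integral>\<^sup>+\<omega>. ?\<phi> (X \<omega>, \<omega> j) \<partial>?M) = (\<integral>\<^sup>+\<omega>. (\<integral>\<^sup>+s. ?\<phi> (X \<omega>, s) \<partial>\<Xi>) \<partial>?M)"
    by (rule indep_nn[OF prob K Xm Xr \<phi>m])
  also have "\<dots> \<le> (\<integral>\<^sup>+\<omega>. ennreal (\<sigma>\<^sup>2) \<partial>?M)"
    by (rule nn_integral_mono) (use var XZ in \<open>simp add: Fc_X\<close>)
  also have "\<dots> = ennreal (\<sigma>\<^sup>2)" by (simp add: PM.emeasure_space_1)
  finally have nn: "(\<integral>\<^sup>+\<omega>. ennreal ((norm (Fh (X \<omega>) (\<omega> j) - F (X \<omega>)))\<^sup>2) \<partial>?M) \<le> ennreal (\<sigma>\<^sup>2)"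
    by (simp add: Fc_X)
  show int: "integrable ?M (\<lambda>\<omega>. (norm (Fh (X \<omega>) (\<omega> j) - F (X \<omega>)))\<^sup>2)"
    by (rule integrableI_nonneg[OF fm]) (use nn in \<open>auto simp: top_unique order.strict_trans1\<close>)
  have "ennreal (\<integral>\<omega>. (norm (Fh (X \<omega>) (\<omega> j) - F (X \<omega>)))\<^sup>2 \<partial>?M) = (\<integral>\<^sup>+\<omega>. ennreal ((norm (Fh (X \<omega>) (\<omega> j) - F (X \<omega>)))\<^sup>2) \<partial>?M)"
    by (rule nn_integral_eq_integral[OF int, symmetric]) simp
  with nn have "ennreal (\<integral>\<omega>. (norm (Fh (X \<omega>) (\<omega> j) - F (X \<omega>)))\<^sup>2 \<partial>?M) \<le> ennreal (\<sigma>\<^sup>2)"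
    by simp
  then show "(\<integral>\<omega>. (norm (Fh (X \<omega>) (\<omega> j) - F (X \<omega>)))\<^sup>2 \<partial>?M) \<le> \<sigma>\<^sup>2"
    by (subst (asm) ennreal_le_iff) simp_all
qed

lemma noise_abs:
  "integrable (PiM UNIV (\<lambda>_. \<Xi>)) (\<lambda>\<omega>. norm (Fh (X \<omega>) (\<omega> j) - F (X \<omega>)))"
proof -
  let ?M = "PiM UNIV (\<lambda>_::nat. \<Xi>)"
  interpret PM: prob_space ?M by (rule probM)
  let ?\<phi> = "\<lambda>p. ennreal (norm (Fh (fst p) (snd p) - F (closest_point Z (fst p))))"
  have \<phi>m: "?\<phi> \<in> borel_measurable (borel \<Otimes>\<^sub>M \<Xi>)" using psi_meas by measurable
  have fm: "(\<lambda>\<omega>. norm (Fh (X \<omega>) (\<omega> j) - F (X \<omega>))) \<in> borel_measurable ?M" using em by measurable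
  have "(\<integral>\<^sup>+\<omega>. ?\<phi> (X \<omega>, \<omega> j) \<partial>?M) = (\<integral>\<^sup>+\<omega>. (\<integral>\<^sup>+s. ?\<phi> (X \<omega>, s) \<partial>\<Xi>) \<partial>?M)"
    by (rule indep_nn[OF prob K Xm Xr \<phi>m])
  also have "\<dots> \<le> (\<integral>\<^sup>+\<omega>. ennreal \<delta> \<partial>?M)"
    by (rule nn_integral_mono) (use bias XZ in \<open>simp add: Fc_X\<close>)
  also have "\<dots> = ennreal \<delta>" by (simp add: PM.emeasure_space_1)
  finally have nn: "(\<integral>\<^sup>+\<omega>. ennreal (norm (Fh (X \<omega>) (\<omega> j) - F (X \<omega>))) \<partial>?M) \<le> ennreal \<delta>"
    by (simp add: Fc_X)
  show "integrable ?M (\<lambda>\<omega>. norm (Fh (X \<omega>) (\<omega> j) - F (X \<omega>)))"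
    by (rule integrableI_nonneg[OF fm]) (use nn in \<open>auto simp: top_unique order.strict_trans1\<close>)
qed

lemma noise_bias:
  "integrable (PiM UNIV (\<lambda>_. \<Xi>)) (\<lambda>\<omega>. (Fh (X \<omega>) (\<omega> j) - F (X \<omega>)) \<bullet> (X \<omega> - zstar))"
  "- (\<delta> * D) \<le> (\<integral>\<omega>. (Fh (X \<omega>) (\<omega> j) - F (X \<omega>)) \<bullet> (X \<omega> - zstar) \<partial>(PiM UNIV (\<lambda>_. \<Xi>)))"
proof -
  let ?M = "PiM UNIV (\<lambda>_::nat. \<Xi>)"
  interpret PM: prob_space ?M by (rule probM)
  have fm: "(\<lambda>\<omega>. (Fh (X \<omega>) (\<omega> j) - F (X \<omega>)) \<bullet> (X \<omega> - zstar)) \<in> borel_measurable ?M"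
    using em XmU by measurable
  show int: "integrable ?M (\<lambda>\<omega>. (Fh (X \<omega>) (\<omega> j) - F (X \<omega>)) \<bullet> (X \<omega> - zstar))"
  proof (rule Bochner_Integration.integrable_bound[OF integrable_mult_right[OF noise_abs, of D] fm])
    show "AE \<omega> in ?M. norm ((Fh (X \<omega>) (\<omega> j) - F (X \<omega>)) \<bullet> (X \<omega> - zstar)) \<le> norm (D * norm (Fh (X \<omega>) (\<omega> j) - F (X \<omega>)))"
    proof (rule AE_I2)
      fix \<omega>
      have d: "norm (X \<omega> - zstar) \<le> D" using diam XZ zsZ by auto
      have "norm ((Fh (X \<omega>) (\<omega> j) - F (X \<omega>)) \<bullet> (X \<omega> - zstar)) \<le> norm (Fh (X \<omega>) (\<omega> j) - F (X \<omega>)) * norm (X \<omega> - zstar)"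
        using Cauchy_Schwarz_ineq2 by simp
      also have "\<dots> \<le> norm (Fh (X \<omega>) (\<omega> j) - F (X \<omega>)) * D" using d by (intro mult_left_mono) auto
      also have "\<dots> \<le> norm (D * norm (Fh (X \<omega>) (\<omega> j) - F (X \<omega>)))" by (simp add: mult.commute)
      finally show "norm ((Fh (X \<omega>) (\<omega> j) - F (X \<omega>)) \<bullet> (X \<omega> - zstar)) \<le> norm (D * norm (Fh (X \<omega>) (\<omega> j) - F (X \<omega>)))" .
    qed
  qed
  let ?\<phi> = "\<lambda>p. (Fh (fst p) (snd p) - F (closest_point Z (fst p))) \<bullet> (fst p - zstar)"
  have \<phi>m: "?\<phi> \<in> borel_measurable (borel \<Otimes>\<^sub>M \<Xi>)" using psi_meas by measurable
  have "(\<integral>\<omega>. ?\<phi> (X \<omega>, \<omega> j) \<partial>?M) = (\<integral>\<omega>. (\<integral>s. ?\<phi> (X \<omega>, s) \<partial>\<Xi>) \<partial>?M)"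
    by (rule indep_int[OF prob K Xm Xr \<phi>m]) (use int in \<open>simp add: Fc_X\<close>)
  moreover have "- (\<delta> * D) \<le> (\<integral>\<omega>. (\<integral>s. ?\<phi> (X \<omega>, s) \<partial>\<Xi>) \<partial>?M)"
  proof (rule int_lower_bound[OF probM])
    show "\<And>\<omega>. - (\<delta> * D) \<le> (\<integral>s. ?\<phi> (X \<omega>, s) \<partial>\<Xi>)" using inner_bias[OF XZ] by simp
    have "0 \<le> D" using diam Z(3) by (metis all_not_in_conv norm_ge_zero order_trans)
    then show "- (\<delta> * D) \<le> 0" using noise by simp
  qed
  ultimately show "- (\<delta> * D) \<le> (\<integral>\<omega>. (Fh (X \<omega>) (\<omega> j) - F (X \<omega>)) \<bullet> (X \<omega> - zstar) \<partial>?M)"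
    by (simp add: Fc_X)
qed

end
end


theorem lemma1:
  fixes Z :: "'a::euclidean_space set"
    and F :: "'a \<Rightarrow> 'a"
    and Fh :: "'a \<Rightarrow> 's \<Rightarrow> 'a"
    and \<Xi> :: "'s measure"
    and D \<mu> L \<delta> \<sigma> \<alpha> \<beta> \<gamma> \<eta> \<tau> :: real
    and zstar z0 :: 'a
    and k :: nat
  assumes Z: "closed Z" "convex Z" "Z \<noteq> {}"
    and diam: "\<forall>z\<in>Z. \<forall>z'\<in>Z. norm (z - z') \<le> D"
    and mu: "0 < \<mu>" "\<mu> \<le> L"
    and strmon: "\<forall>z\<in>Z. \<forall>z'\<in>Z. (F z - F z') \<bullet> (z - z') \<ge> \<mu> * (norm (z - z'))\<^sup>2"
    and lip: "\<forall>z\<in>Z. \<forall>z'\<in>Z. norm (F z - F z') \<le> L * norm (z - z')"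
    and zstar: "zstar \<in> Z" "\<forall>z\<in>Z. F zstar \<bullet> (z - zstar) \<ge> 0"
    and prob: "prob_space \<Xi>"
    and Fh_meas: "(\<lambda>(z, s). Fh z s) \<in> borel_measurable (borel \<Otimes>\<^sub>M \<Xi>)"
    and noise: "\<delta> \<ge> 0" "\<sigma> \<ge> 0"
    and bias: "\<forall>z\<in>Z. (\<integral>\<^sup>+ s. ennreal (norm (Fh z s - F z)) \<partial>\<Xi>) \<le> ennreal \<delta>"
    and var: "\<forall>z\<in>Z. (\<integral>\<^sup>+ s. ennreal ((norm (Fh z s - F z))\<^sup>2) \<partial>\<Xi>) \<le> ennreal (\<sigma>\<^sup>2)"
    and params: "\<alpha> \<ge> 0" "\<beta> \<ge> 0" "\<gamma> \<ge> 0" "\<eta> \<ge> 0" "\<tau> \<ge> 0"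
    and z0: "z0 \<in> Z"
  shows
   "(let M = (\<Pi>\<^sub>M i\<in>(UNIV::nat set). \<Xi>);
         z = (\<lambda>j \<omega>. sep_z Z Fh \<alpha> \<beta> \<gamma> \<eta> \<tau> z0 \<omega> j);
         zp = (\<lambda>j \<omega>. sep_zprev Z Fh \<alpha> \<beta> \<gamma> \<eta> \<tau> z0 \<omega> j);
         zh = (\<lambda>j \<omega>. sep_zhalf Z Fh \<alpha> \<beta> \<gamma> \<eta> \<tau> z0 \<omega> j);
         d = (\<lambda>j. \<integral>\<omega>. (norm (z j \<omega> - zstar))\<^sup>2 \<partial>M);
         dprev = (\<integral>\<omega>. (norm (zp k \<omega> - zstar))\<^sup>2 \<partial>M)
     in (1 - 4 * \<bar>\<gamma> - \<beta>\<bar> - \<tau> * L) * d (Suc k)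
        \<le> (1 + 4 * \<gamma> + 6 * \<bar>\<gamma> - \<beta>\<bar> + 4 * \<tau> * L - \<alpha> * \<mu>) * d k
          + (2 * \<bar>\<gamma> - \<beta>\<bar> + 2 * \<gamma> + 4 * \<tau> * L) * dprev
          + (2 * \<alpha>\<^sup>2 * L\<^sup>2 + 2 * \<bar>\<gamma> - \<beta>\<bar> + 2 * \<gamma> + 2 * \<alpha> * \<mu> - 1)
              * (\<integral>\<omega>. (norm (zh k \<omega> - z k \<omega>))\<^sup>2 \<partial>M)
          + 8 * (\<alpha>\<^sup>2 + \<tau> / L) * \<sigma>\<^sup>2 + 2 * \<alpha> * \<delta> * D
          + 2 * (\<eta> - \<alpha>) * (\<integral>\<omega>. (z (Suc k) \<omega> - zh k \<omega>) \<bullet> Fh (z k \<omega>) (\<omega> (2 * k)) \<partial>M))"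
proof -
  let ?M = "PiM UNIV (\<lambda>_::nat. \<Xi>)"
  interpret PM: prob_space ?M by (rule prob_space_PiM) (use prob in auto)
  have Lpos: "0 < L" using mu by simp
  define zk where "zk \<omega> = sep_z Z Fh \<alpha> \<beta> \<gamma> \<eta> \<tau> z0 \<omega> k" for \<omega>
  define zpk where "zpk \<omega> = sep_zprev Z Fh \<alpha> \<beta> \<gamma> \<eta> \<tau> z0 \<omega> k" for \<omega>
  define zhk where "zhk \<omega> = sep_zhalf Z Fh \<alpha> \<beta> \<gamma> \<eta> \<tau> z0 \<omega> k" for \<omega>
  define znk where "znk \<omega> = sep_z Z Fh \<alpha> \<beta> \<gamma> \<eta> \<tau> z0 \<omega> (Suc k)" for \<omega>
  define gk where "gk \<omega> = Fh (zk \<omega>) (\<omega> (2 * k))" for \<omega>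
  define gp where "gp \<omega> = Fh (zpk \<omega>) (\<omega> (sep_prev_idx k))" for \<omega>
  define hh where "hh \<omega> = Fh (zhk \<omega>) (\<omega> (2 * k + 1))" for \<omega>
  have inZ: "zk \<omega> \<in> Z" "zpk \<omega> \<in> Z" "zhk \<omega> \<in> Z" "znk \<omega> \<in> Z" for \<omega>
    using sz_in[OF Z(1) Z(3) z0, of Fh \<alpha> \<beta> \<gamma> \<eta> \<tau> \<omega> k] sz_in[OF Z(1) Z(3) z0, of Fh \<alpha> \<beta> \<gamma> \<eta> \<tau> \<omega> "Suc k"]
      szh_in[OF Z(1) Z(3), of Fh \<alpha> \<beta> \<gamma> \<eta> \<tau> z0 \<omega> k]
    by (auto simp: zk_def zpk_def zhk_def znk_def)
  have Dnn: "0 \<le> D" using diam z0 by force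
  have sqD: "(norm (x - y))\<^sup>2 \<le> D\<^sup>2" if "x \<in> Z" "y \<in> Z" for x y
    using diam that by (intro power_mono) auto
  have cU: "(\<lambda>\<omega>. \<omega> i) \<in> measurable ?M \<Xi>" for i
    using measurable_component_singleton[of i UNIV "\<lambda>_. \<Xi>"] by simp
  have zkm: "zk \<in> borel_measurable ?M" and zpkm: "zpk \<in> borel_measurable ?M"
    using sz_meas[OF Z Fh_meas, where k=k and K=UNIV] unfolding zk_def[abs_def] zpk_def[abs_def] by auto
  have znkm: "znk \<in> borel_measurable ?M"
    using sz_meas[OF Z Fh_meas, where k="Suc k" and K=UNIV] unfolding znk_def[abs_def] by auto
  have zhkm: "zhk \<in> borel_measurable ?M"
    using szh_meas[OF Z Fh_meas, where k=k and K=UNIV] unfolding zhk_def[abs_def] by auto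
  have gkm: "gk \<in> borel_measurable ?M"
    unfolding gk_def[abs_def] by (rule Fh_comp[OF Fh_meas zkm cU])
  have gpm: "gp \<in> borel_measurable ?M"
    unfolding gp_def[abs_def] by (rule Fh_comp[OF Fh_meas zpkm cU])
  have hhm: "hh \<in> borel_measurable ?M"
    unfolding hh_def[abs_def] by (rule Fh_comp[OF Fh_meas zhkm cU])
  note [measurable] = zkm zpkm znkm zhkm gkm gpm hhm
  have A: "integrable ?M (\<lambda>\<omega>. (norm (gk \<omega> - F (zk \<omega>)))\<^sup>2)"
      "(\<integral>\<omega>. (norm (gk \<omega> - F (zk \<omega>)))\<^sup>2 \<partial>?M) \<le> \<sigma>\<^sup>2"
      "integrable ?M (\<lambda>\<omega>. norm (gk \<omega> - F (zk \<omega>)))"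
  proof -
    have Xm: "zk \<in> borel_measurable (PiM {..<2 * k} (\<lambda>_. \<Xi>))"
      using sz_meas[OF Z Fh_meas, where k=k and K="{..<2*k}"] unfolding zk_def[abs_def] by auto
    have Xr: "\<And>\<omega>. zk (restrict \<omega> {..<2 * k}) = zk \<omega>"
      unfolding zk_def by (rule sz_restrict) simp
    note i = noise_sq[OF Z prob Fh_meas bias var noise diam Lpos lip zstar(1) _ _ Xm Xr inZ(1), of "2 * k"]
      noise_abs[OF Z prob Fh_meas bias var noise diam Lpos lip zstar(1) _ _ Xm Xr inZ(1), of "2 * k"]
    then show "integrable ?M (\<lambda>\<omega>. (norm (gk \<omega> - F (zk \<omega>)))\<^sup>2)"
      "(\<integral>\<omega>. (norm (gk \<omega> - F (zk \<omega>)))\<^sup>2 \<partial>?M) \<le> \<sigma>\<^sup>2"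
      "integrable ?M (\<lambda>\<omega>. norm (gk \<omega> - F (zk \<omega>)))"
      by (simp_all add: gk_def)
  qed
  have E: "integrable ?M (\<lambda>\<omega>. (norm (hh \<omega> - F (zhk \<omega>)))\<^sup>2)"
      "(\<integral>\<omega>. (norm (hh \<omega> - F (zhk \<omega>)))\<^sup>2 \<partial>?M) \<le> \<sigma>\<^sup>2"
      "integrable ?M (\<lambda>\<omega>. (hh \<omega> - F (zhk \<omega>)) \<bullet> (zhk \<omega> - zstar))"
      "- (\<delta> * D) \<le> (\<integral>\<omega>. (hh \<omega> - F (zhk \<omega>)) \<bullet> (zhk \<omega> - zstar) \<partial>?M)"
  proof -
    have Xm: "zhk \<in> borel_measurable (PiM {..<Suc (2 * k)} (\<lambda>_. \<Xi>))"
      using szh_meas[OF Z Fh_meas, where k=k and K="{..<Suc (2*k)}"] unfolding zhk_def[abs_def] by auto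
    have Xr: "\<And>\<omega>. zhk (restrict \<omega> {..<Suc (2 * k)}) = zhk \<omega>"
      unfolding zhk_def by (rule szh_restrict) simp
    note i = noise_sq[OF Z prob Fh_meas bias var noise diam Lpos lip zstar(1) _ _ Xm Xr inZ(3), of "2 * k + 1"]
      noise_bias[OF Z prob Fh_meas bias var noise diam Lpos lip zstar(1) _ _ Xm Xr inZ(3), of "2 * k + 1"]
    then show "integrable ?M (\<lambda>\<omega>. (norm (hh \<omega> - F (zhk \<omega>)))\<^sup>2)"
      "(\<integral>\<omega>. (norm (hh \<omega> - F (zhk \<omega>)))\<^sup>2 \<partial>?M) \<le> \<sigma>\<^sup>2"
      "integrable ?M (\<lambda>\<omega>. (hh \<omega> - F (zhk \<omega>)) \<bullet> (zhk \<omega> - zstar))"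
      "- (\<delta> * D) \<le> (\<integral>\<omega>. (hh \<omega> - F (zhk \<omega>)) \<bullet> (zhk \<omega> - zstar) \<partial>?M)"
      by (simp_all add: hh_def)
  qed
  have C: "integrable ?M (\<lambda>\<omega>. (norm (gp \<omega> - F (zpk \<omega>)))\<^sup>2)"
      "(\<integral>\<omega>. (norm (gp \<omega> - F (zpk \<omega>)))\<^sup>2 \<partial>?M) \<le> \<sigma>\<^sup>2"
  proof -
    have Xm: "zpk \<in> borel_measurable (PiM {..<sep_prev_idx k} (\<lambda>_. \<Xi>))"
    proof (cases k)
      case 0
      then have "zpk = (\<lambda>_. z0)" by (simp add: fun_eq_iff zpk_def szp0)
      then show ?thesis by simp
    next
      case (Suc m)
      then show ?thesis
        using sz_meas[OF Z Fh_meas, where k=m and K="{..<2*m}"]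
        unfolding zpk_def[abs_def] by (simp add: szpSuc sep_prev_idx_def)
    qed
    have Xr: "\<And>\<omega>. zpk (restrict \<omega> {..<sep_prev_idx k}) = zpk \<omega>"
    proof (cases k)
      case 0
      then show "\<And>\<omega>. zpk (restrict \<omega> {..<sep_prev_idx k}) = zpk \<omega>" by (simp add: zpk_def szp0)
    next
      case (Suc m)
      then show "\<And>\<omega>. zpk (restrict \<omega> {..<sep_prev_idx k}) = zpk \<omega>"
        unfolding zpk_def using sz_restrict(1)[of m "{..<2*m}"] by (simp add: szpSuc sep_prev_idx_def)
    qed
    note i = noise_sq[OF Z prob Fh_meas bias var noise diam Lpos lip zstar(1) _ _ Xm Xr inZ(2), of "sep_prev_idx k"]
    then show "integrable ?M (\<lambda>\<omega>. (norm (gp \<omega> - F (zpk \<omega>)))\<^sup>2)"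
      "(\<integral>\<omega>. (norm (gp \<omega> - F (zpk \<omega>)))\<^sup>2 \<partial>?M) \<le> \<sigma>\<^sup>2"
      by (simp_all add: gp_def)
  qed
  define c0 where "c0 = 1 - 4*\<bar>\<gamma>-\<beta>\<bar> - \<tau>*L"
  define c1 where "c1 = 1 + 4*\<gamma> + 6*\<bar>\<gamma>-\<beta>\<bar> + 4*\<tau>*L - \<alpha>*\<mu>"
  define c2 where "c2 = 2*\<bar>\<gamma>-\<beta>\<bar> + 2*\<gamma> + 4*\<tau>*L"
  define c3 where "c3 = 2*\<alpha>\<^sup>2*L\<^sup>2 + 2*\<bar>\<gamma>-\<beta>\<bar> + 2*\<gamma> + 2*\<alpha>*\<mu> - 1"
  define nz where "nz \<omega> = (norm (znk \<omega> - zstar))\<^sup>2" for \<omega>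
  define n0 where "n0 \<omega> = (norm (zk \<omega> - zstar))\<^sup>2" for \<omega>
  define np where "np \<omega> = (norm (zpk \<omega> - zstar))\<^sup>2" for \<omega>
  define hq where "hq \<omega> = (norm (zhk \<omega> - zk \<omega>))\<^sup>2" for \<omega>
  define ee where "ee \<omega> = (norm (hh \<omega> - F (zhk \<omega>)))\<^sup>2" for \<omega>
  define ea where "ea \<omega> = (norm (gk \<omega> - F (zk \<omega>)))\<^sup>2" for \<omega>
  define ec where "ec \<omega> = (norm (gp \<omega> - F (zpk \<omega>)))\<^sup>2" for \<omega>
  define eb where "eb \<omega> = (hh \<omega> - F (zhk \<omega>)) \<bullet> (zhk \<omega> - zstar)" for \<omega>
  define e8 where "e8 \<omega> = (znk \<omega> - zhk \<omega>) \<bullet> gk \<omega>" for \<omega>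
  have pw: "c0 * nz \<omega> \<le> c1 * n0 \<omega> + c2 * np \<omega> + c3 * hq \<omega> + 4*\<alpha>\<^sup>2 * ee \<omega> + 4*\<alpha>\<^sup>2 * ea \<omega>
      + 4*(\<tau>/L) * (ea \<omega> + ec \<omega>) - 2*\<alpha> * eb \<omega> + 2*(\<eta>-\<alpha>) * e8 \<omega>" for \<omega>
  proof -
    have zn_eq: "znk \<omega> = closest_point Z (zk \<omega> - \<alpha> *\<^sub>R hh \<omega> + \<gamma> *\<^sub>R (zk \<omega> - zpk \<omega>) - \<tau> *\<^sub>R (gk \<omega> - gp \<omega>))"
      by (simp add: znk_def szSuc zk_def zpk_def hh_def zhk_def gk_def gp_def)
    have zh_eq: "zhk \<omega> = closest_point Z (zk \<omega> + \<beta> *\<^sub>R (zk \<omega> - zpk \<omega>) - \<eta> *\<^sub>R gk \<omega>)"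
      by (simp add: zhk_def sep_zhalf_def Let_def zk_def zpk_def gk_def)
    have H1: "(zk \<omega> - \<alpha> *\<^sub>R hh \<omega> + \<gamma> *\<^sub>R (zk \<omega> - zpk \<omega>) - \<tau> *\<^sub>R (gk \<omega> - gp \<omega>) - znk \<omega>) \<bullet> (zstar - znk \<omega>) \<le> 0"
      unfolding zn_eq by (rule closest_point_dot[OF Z(2) Z(1) zstar(1)])
    have H2: "(zk \<omega> + \<beta> *\<^sub>R (zk \<omega> - zpk \<omega>) - \<eta> *\<^sub>R gk \<omega> - zhk \<omega>) \<bullet> (znk \<omega> - zhk \<omega>) \<le> 0"
      unfolding zh_eq by (rule closest_point_dot[OF Z(2) Z(1) inZ(4)])
    have H3: "(F (zhk \<omega>) - F zstar) \<bullet> (zhk \<omega> - zstar) \<ge> \<mu> * (norm (zhk \<omega> - zstar))\<^sup>2"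
      using strmon inZ(3) zstar(1) by blast
    have H4: "F zstar \<bullet> (zhk \<omega> - zstar) \<ge> 0" using zstar(2) inZ(3) by blast
    have H5: "norm (F (zhk \<omega>) - F (zk \<omega>)) \<le> L * norm (zhk \<omega> - zk \<omega>)" using lip inZ by blast
    have H6: "norm (F (zk \<omega>) - F (zpk \<omega>)) \<le> L * norm (zk \<omega> - zpk \<omega>)" using lip inZ by blast
    have ecc: "(norm (F (zpk \<omega>) - gp \<omega>))\<^sup>2 = ec \<omega>" by (simp add: ec_def norm_minus_commute)
    from pathwise[OF H1 H2 H3 H4 H5 H6 mu params] show ?thesis
      unfolding ecc c0_def c1_def c2_def c3_def nz_def n0_def np_def hq_def ee_def ea_def eb_def e8_def .
  qed
  have bnd: "integrable ?M f" if "f \<in> borel_measurable ?M" "\<And>\<omega>. norm (f \<omega>) \<le> B" for f :: "_ \<Rightarrow> real" and B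
  proof (rule Bochner_Integration.integrable_bound[OF PM.integrable_const[of B] that(1)])
    show "AE \<omega> in ?M. norm (f \<omega>) \<le> norm B"
      using that(2) by (intro AE_I2) (metis abs_ge_self order_trans real_norm_def)
  qed
  have i_nz: "integrable ?M nz" unfolding nz_def[abs_def] by (rule bnd[of _ "D\<^sup>2"]) (use sqD inZ zstar(1) in auto)
  have i_n0: "integrable ?M n0" unfolding n0_def[abs_def] by (rule bnd[of _ "D\<^sup>2"]) (use sqD inZ zstar(1) in auto)
  have i_np: "integrable ?M np" unfolding np_def[abs_def] by (rule bnd[of _ "D\<^sup>2"]) (use sqD inZ zstar(1) in auto)
  have i_hq: "integrable ?M hq" unfolding hq_def[abs_def] by (rule bnd[of _ "D\<^sup>2"]) (use sqD inZ in auto)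
  have i_ee: "integrable ?M ee" unfolding ee_def[abs_def] by (rule E(1))
  have i_ea: "integrable ?M ea" unfolding ea_def[abs_def] by (rule A(1))
  have i_ec: "integrable ?M ec" unfolding ec_def[abs_def] by (rule C(1))
  have i_eb: "integrable ?M eb" unfolding eb_def[abs_def] by (rule E(3))
  have i_e8: "integrable ?M e8"
  proof -
    define B0 where "B0 = norm (F z0) + L * D"
    have FB: "norm (F (zk \<omega>)) \<le> B0" for \<omega>
    proof -
      have "norm (F (zk \<omega>) - F z0) \<le> L * norm (zk \<omega> - z0)" using lip inZ z0 by blast
      also have "\<dots> \<le> L * D" using diam inZ z0 Lpos by (intro mult_left_mono) auto
      finally show ?thesis unfolding B0_def using norm_triangle_ineq2[of "F (zk \<omega>)" "F z0"] by linarith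
    qed
    have ib: "integrable ?M (\<lambda>\<omega>. D * (norm (gk \<omega> - F (zk \<omega>)) + B0))"
      by (intro integrable_mult_right Bochner_Integration.integrable_add A(3) PM.integrable_const)
    show ?thesis
    proof (rule Bochner_Integration.integrable_bound[OF ib])
      show "e8 \<in> borel_measurable ?M" unfolding e8_def[abs_def] by measurable
      show "AE \<omega> in ?M. norm (e8 \<omega>) \<le> norm (D * (norm (gk \<omega> - F (zk \<omega>)) + B0))"
      proof (rule AE_I2)
        fix \<omega>
        have "norm (e8 \<omega>) \<le> norm (znk \<omega> - zhk \<omega>) * norm (gk \<omega>)"
          unfolding e8_def using Cauchy_Schwarz_ineq2 by simp
        also have "\<dots> \<le> D * (norm (gk \<omega> - F (zk \<omega>)) + B0)"
        proof (rule mult_mono)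
          show "norm (znk \<omega> - zhk \<omega>) \<le> D" using diam inZ by blast
          show "norm (gk \<omega>) \<le> norm (gk \<omega> - F (zk \<omega>)) + B0"
            using norm_triangle_ineq[of "gk \<omega> - F (zk \<omega>)" "F (zk \<omega>)"] FB[of \<omega>] by simp
        qed (use Dnn in auto)
        also have "\<dots> \<le> norm (D * (norm (gk \<omega> - F (zk \<omega>)) + B0))" by simp
        finally show "norm (e8 \<omega>) \<le> norm (D * (norm (gk \<omega> - F (zk \<omega>)) + B0))" .
      qed
    qed
  qed
  have intR: "integrable ?M (\<lambda>\<omega>. c1 * n0 \<omega> + c2 * np \<omega> + c3 * hq \<omega> + 4*\<alpha>\<^sup>2 * ee \<omega> + 4*\<alpha>\<^sup>2 * ea \<omega>
      + 4*(\<tau>/L) * (ea \<omega> + ec \<omega>) - 2*\<alpha> * eb \<omega> + 2*(\<eta>-\<alpha>) * e8 \<omega>)"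
    using i_n0 i_np i_hq i_ee i_ea i_ec i_eb i_e8 by auto
  have intL: "integrable ?M (\<lambda>\<omega>. c0 * nz \<omega>)" using i_nz by auto
  have mono: "(\<integral>\<omega>. c0 * nz \<omega> \<partial>?M) \<le> (\<integral>\<omega>. c1 * n0 \<omega> + c2 * np \<omega> + c3 * hq \<omega> + 4*\<alpha>\<^sup>2 * ee \<omega> + 4*\<alpha>\<^sup>2 * ea \<omega>
      + 4*(\<tau>/L) * (ea \<omega> + ec \<omega>) - 2*\<alpha> * eb \<omega> + 2*(\<eta>-\<alpha>) * e8 \<omega> \<partial>?M)"
    by (rule integral_mono[OF intL intR pw])
  have eqR: "(\<integral>\<omega>. c1 * n0 \<omega> + c2 * np \<omega> + c3 * hq \<omega> + 4*\<alpha>\<^sup>2 * ee \<omega> + 4*\<alpha>\<^sup>2 * ea \<omega>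
      + 4*(\<tau>/L) * (ea \<omega> + ec \<omega>) - 2*\<alpha> * eb \<omega> + 2*(\<eta>-\<alpha>) * e8 \<omega> \<partial>?M)
    = c1 * integral\<^sup>L ?M n0 + c2 * integral\<^sup>L ?M np + c3 * integral\<^sup>L ?M hq + 4*\<alpha>\<^sup>2 * integral\<^sup>L ?M ee
      + 4*\<alpha>\<^sup>2 * integral\<^sup>L ?M ea + 4*(\<tau>/L) * (integral\<^sup>L ?M ea + integral\<^sup>L ?M ec) - 2*\<alpha> * integral\<^sup>L ?M eb
      + 2*(\<eta>-\<alpha>) * integral\<^sup>L ?M e8"
    using i_n0 i_np i_hq i_ee i_ea i_ec i_eb i_e8 by simp
  have eqL: "(\<integral>\<omega>. c0 * nz \<omega> \<partial>?M) = c0 * integral\<^sup>L ?M nz" by simp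
  have b_ee: "4*\<alpha>\<^sup>2 * integral\<^sup>L ?M ee \<le> 4*\<alpha>\<^sup>2 * \<sigma>\<^sup>2"
    using E(2) unfolding ee_def[symmetric] by (intro mult_left_mono) auto
  have b_ea: "4*\<alpha>\<^sup>2 * integral\<^sup>L ?M ea \<le> 4*\<alpha>\<^sup>2 * \<sigma>\<^sup>2"
    using A(2) unfolding ea_def[symmetric] by (intro mult_left_mono) auto
  have b_c: "4*(\<tau>/L) * (integral\<^sup>L ?M ea + integral\<^sup>L ?M ec) \<le> 4*(\<tau>/L) * (2 * \<sigma>\<^sup>2)"
    using A(2) C(2) params Lpos unfolding ea_def[symmetric] ec_def[symmetric] by (intro mult_left_mono) auto
  have b_eb: "- 2*\<alpha> * integral\<^sup>L ?M eb \<le> 2 * \<alpha> * \<delta> * D"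
  proof -
    have "\<alpha> * (- (\<delta> * D)) \<le> \<alpha> * integral\<^sup>L ?M eb"
      using E(4) params unfolding eb_def[symmetric] by (intro mult_left_mono) auto
    moreover have "\<alpha> * (- (\<delta> * D)) = - (2 * \<alpha> * \<delta> * D) / 2" by simp
    moreover have "- 2*\<alpha> * integral\<^sup>L ?M eb = - 2 * (\<alpha> * integral\<^sup>L ?M eb)" by simp
    ultimately show ?thesis by linarith
  qed
  have ex: "8 * (\<alpha>\<^sup>2 + \<tau> / L) * \<sigma>\<^sup>2 = 4*\<alpha>\<^sup>2 * \<sigma>\<^sup>2 + 4*\<alpha>\<^sup>2 * \<sigma>\<^sup>2 + 4*(\<tau>/L) * (2 * \<sigma>\<^sup>2)"
    by (simp add: algebra_simps)
  have final: "c0 * integral\<^sup>L ?M nz \<le> c1 * integral\<^sup>L ?M n0 + c2 * integral\<^sup>L ?M np + c3 * integral\<^sup>L ?M hq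
      + 8 * (\<alpha>\<^sup>2 + \<tau> / L) * \<sigma>\<^sup>2 + 2 * \<alpha> * \<delta> * D + 2*(\<eta>-\<alpha>) * integral\<^sup>L ?M e8"
  proof -
    have s1: "c0 * integral\<^sup>L ?M nz \<le> c1 * integral\<^sup>L ?M n0 + c2 * integral\<^sup>L ?M np + c3 * integral\<^sup>L ?M hq + 4*\<alpha>\<^sup>2 * integral\<^sup>L ?M ee
      + 4*\<alpha>\<^sup>2 * integral\<^sup>L ?M ea + 4*(\<tau>/L) * (integral\<^sup>L ?M ea + integral\<^sup>L ?M ec) - 2*\<alpha> * integral\<^sup>L ?M eb
      + 2*(\<eta>-\<alpha>) * integral\<^sup>L ?M e8"
      using mono unfolding eqR eqL .
    have s2: "4*\<alpha>\<^sup>2 * integral\<^sup>L ?M ee + 4*\<alpha>\<^sup>2 * integral\<^sup>L ?M ea + 4*(\<tau>/L) * (integral\<^sup>L ?M ea + integral\<^sup>L ?M ec)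
        - 2*\<alpha> * integral\<^sup>L ?M eb \<le> 8 * (\<alpha>\<^sup>2 + \<tau> / L) * \<sigma>\<^sup>2 + 2 * \<alpha> * \<delta> * D"
      using b_ee b_ea b_c b_eb ex by linarith
    show ?thesis using s1 s2 by linarith
  qed
  show ?thesis
    using final
    unfolding Let_def c0_def c1_def c2_def c3_def nz_def[abs_def] n0_def[abs_def] np_def[abs_def] hq_def[abs_def]
      e8_def[abs_def] znk_def zk_def zpk_def zhk_def gk_def
    by simp
qed

end
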